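(* Let $n\ge 2$, $m\ge 1$ and consider a star junction in which pipes $P_1,\dots,P_n$ connect at a single node to pipes $P_{n+1},\dots,P_{n+m}$. Suppose real differentiable functions $p_{j,\ell},p_{j,r},q_{j,\ell},q_{j,r}$ ($j=1,\dots,n+m$) satisfy, for all $t$, \[ \dot p_{j,r}=c_j(q_{j,r}-q_{j,\ell}),\qquad \dot q_{j,\ell}=b_jp_{j,r}+d_jp_{j,\ell}+e_jq_{j,\ell}, \] and the junction constraints \[ p_{1,r}=\dots=p_{n,r}=p_{n+1,\ell}=\dots=p_{n+m,\ell},\qquad \sum_{k=1}^n q_{k,r}=\sum_{j=n+1}^{n+m}q_{j,\ell}. \] Then for every $k\in\{1,\dots,n\}$ and $j\in\{n+1,\dots,n+m\}$, for all $t$, \[ \left(\sum_{j'=1}^n\prod_{\substack{i=1\\ i\neq j'}}^n c_i\right)q_{k,r}=\prod_{\substack{i=1\\ i\neq k}}^n c_i\left(\sum_{i=n+1}^{n+m}q_{i,\ell}-\sum_{\substack{i=1\\ i\neq k}}^n q_{i,\ell}\right)+\left(\sum_{j'=1}^n\prod_{\substack{i=1\\ i\neq j'}}^n c_i-\prod_{\substack{i=1\\ i\neq k}}^n c_i\right)q_{k,\ell}, \qquad p_{j,\ell}=p_{1,r}. \]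
   Context: Linearized isothermal one-dimensional pipe flow model: $p$ pressure, $q$ mass flow, subscripts $\ell,r$ the left ($x=0$) and right ($x=L_j$) ends of pipe $P_j$. Coefficients: $c_j=-\frac{R_sT_0z_0}{A_jL_j}$, $b_j=-\frac{A_j}{L_j}$, $d_j=\frac{A_j}{L_j}+\frac{\lambda_j R_sT_0z_0}{2D_jA_j}\frac{q_{ss,j}|q_{ss,j}|}{p_{\ell,ss,j}^2}-\frac{A_jgh_j}{R_sT_0z_0L_j}$, $e_j=-\frac{\lambda_j R_sT_0z_0}{D_jA_j}\frac{|q_{ss,j}|}{p_{\ell,ss,j}}$, with positive constants $R_s,T_0,z_0$, gravity $g$, and per-pipe area $A_j>0$, length $L_j>0$, diameter $D_j>0$, friction factor $\lambda_j$, elevation difference $h_j$, nominal flow $q_{ss,j}>0$, nominal left pressure $p_{\ell,ss,j}>0$; hence all $c_j<0$. The variables $q_{i,\ell}$ ($i=1,\dots,n+m$) and $p_{1,r}$ are regarded as state variables; $q_{k,r}$ ($k\le n$) and $p_{j,\ell}$ ($j>n$) are internal variables. *)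

theory Defs
  imports "HOL-Analysis.Analysis"
begin

text \<open>Coefficients of the linearized isothermal pipe flow model for a single pipe,
  as functions of the physical constants Rs, T0, z0, g and the pipe parameters
  A (area), L (length), D (diameter), lam (friction factor), h (elevation difference),
  qss (nominal flow), pss (nominal left pressure).\<close>

definition pipe_c :: "real \<Rightarrow> real \<Rightarrow> real \<Rightarrow> real \<Rightarrow> real \<Rightarrow> real" where
  "pipe_c Rs T0 z0 A L = - (Rs * T0 * z0) / (A * L)"

definition pipe_b :: "real \<Rightarrow> real \<Rightarrow> real" where
  "pipe_b A L = - A / L"

definition pipe_d :: "real \<Rightarrow> real \<Rightarrow> real \<Rightarrow> real \<Rightarrow> real \<Rightarrow> real \<Rightarrow> real \<Rightarrow> real
    \<Rightarrow> real \<Rightarrow> real \<Rightarrow> real \<Rightarrow> real" where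
  "pipe_d Rs T0 z0 g A L D lam h qss pss =
     A / L + (lam * Rs * T0 * z0) / (2 * D * A) * (qss * \<bar>qss\<bar>) / pss ^ 2
     - (A * g * h) / (Rs * T0 * z0 * L)"

definition pipe_e :: "real \<Rightarrow> real \<Rightarrow> real \<Rightarrow> real \<Rightarrow> real \<Rightarrow> real \<Rightarrow> real \<Rightarrow> real \<Rightarrow> real" where
  "pipe_e Rs T0 z0 A D lam qss pss = - ((lam * Rs * T0 * z0) / (D * A)) * (\<bar>qss\<bar> / pss)"

end

theory Submission
  imports Defs
begin

theorem corollary3:
  fixes n m :: nat
    and Rs T0 z0 g :: real
    and A L D lam h qss pss :: "nat \<Rightarrow> real"
    and p_l p_r q_l q_r :: "nat \<Rightarrow> real \<Rightarrow> real"
  assumes n2: "n \<ge> 2" and m1: "m \<ge> 1"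
    and consts_pos: "Rs > 0" "T0 > 0" "z0 > 0"
    and params: "\<forall>j\<in>{1..n+m}. A j > 0 \<and> L j > 0 \<and> D j > 0 \<and> qss j > 0 \<and> pss j > 0"
    and diff: "\<forall>j\<in>{1..n+m}. \<forall>t. p_l j differentiable (at t) \<and> p_r j differentiable (at t)
                 \<and> q_l j differentiable (at t) \<and> q_r j differentiable (at t)"
    and ode_p: "\<forall>j\<in>{1..n+m}. \<forall>t.
       (p_r j has_real_derivative pipe_c Rs T0 z0 (A j) (L j) * (q_r j t - q_l j t)) (at t)"
    and ode_q: "\<forall>j\<in>{1..n+m}. \<forall>t.
       (q_l j has_real_derivative
          pipe_b (A j) (L j) * p_r j t
          + pipe_d Rs T0 z0 g (A j) (L j) (D j) (lam j) (h j) (qss j) (pss j) * p_l j t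
          + pipe_e Rs T0 z0 (A j) (D j) (lam j) (qss j) (pss j) * q_l j t) (at t)"
    and junc_in: "\<forall>k\<in>{1..n}. \<forall>t. p_r k t = p_r 1 t"
    and junc_out: "\<forall>j\<in>{n+1..n+m}. \<forall>t. p_l j t = p_r 1 t"
    and kirchhoff: "\<forall>t. (\<Sum>k=1..n. q_r k t) = (\<Sum>j=n+1..n+m. q_l j t)"
  shows "\<forall>k\<in>{1..n}. \<forall>j\<in>{n+1..n+m}. \<forall>t.
     (let c = (\<lambda>i. pipe_c Rs T0 z0 (A i) (L i));
          S = (\<Sum>j'=1..n. \<Prod>i\<in>{1..n}-{j'}. c i);
          Pk = (\<Prod>i\<in>{1..n}-{k}. c i)
      in S * q_r k t
         = Pk * ((\<Sum>i=n+1..n+m. q_l i t) - (\<Sum>i\<in>{1..n}-{k}. q_l i t)) + (S - Pk) * q_l k t)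
     \<and> p_l j t = p_r 1 t"
proof (intro ballI allI)
  fix k j t
  assume k: "k \<in> {1..n}" and j: "j \<in> {n+1..n+m}"
  define c where "c = (\<lambda>i. pipe_c Rs T0 z0 (A i) (L i))"
  define d where "d = (\<lambda>i. q_r i t - q_l i t)"
  have one: "1 \<in> {1..n}" using n2 by auto
  have w: "c i * d i = c 1 * d 1" if i: "i \<in> {1..n}" for i
  proof -
    have e: "p_r i = p_r 1" using junc_in i by (intro ext) blast
    have i': "i \<in> {1..n+m}" and o': "1 \<in> {1..n+m}" using i n2 by auto
    have d1: "(p_r i has_real_derivative c i * d i) (at t)"
      unfolding c_def d_def by (rule ode_p[rule_format, OF i'])
    have d2: "(p_r 1 has_real_derivative c 1 * d 1) (at t)"
      unfolding c_def d_def by (rule ode_p[rule_format, OF o'])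
    from d1 have d1': "(p_r 1 has_real_derivative c i * d i) (at t)" by (simp only: e)
    show ?thesis using DERIV_unique[OF d1' d2] .
  qed
  have key: "(\<Prod>i\<in>{1..n}-{j'}. c i) * d k = (\<Prod>i\<in>{1..n}-{k}. c i) * d j'"
    if j': "j' \<in> {1..n}" for j'
  proof (cases "j' = k")
    case True thus ?thesis by simp
  next
    case False
    have a: "{1..n}-{j'} = insert k ({1..n}-{j',k})" using k False by auto
    have b: "{1..n}-{k} = insert j' ({1..n}-{j',k})" using j' False by auto
    have "(\<Prod>i\<in>{1..n}-{j'}. c i) = c k * (\<Prod>i\<in>{1..n}-{j',k}. c i)"
      by (subst a, subst prod.insert) auto
    moreover have "(\<Prod>i\<in>{1..n}-{k}. c i) = c j' * (\<Prod>i\<in>{1..n}-{j',k}. c i)"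
      by (subst b, subst prod.insert) auto
    moreover have "c k * d k = c j' * d j'" using w[OF k] w[OF j'] by (rule trans[OF _ sym])
    ultimately show ?thesis
    proof -
      assume h1: "(\<Prod>i\<in>{1..n}-{j'}. c i) = c k * (\<Prod>i\<in>{1..n}-{j',k}. c i)"
        and h2: "(\<Prod>i\<in>{1..n}-{k}. c i) = c j' * (\<Prod>i\<in>{1..n}-{j',k}. c i)"
        and h3: "c k * d k = c j' * d j'"
      have "(\<Prod>i\<in>{1..n}-{j'}. c i) * d k = (\<Prod>i\<in>{1..n}-{j',k}. c i) * (c k * d k)"
        by (simp only: h1 mult_ac)
      also have "\<dots> = (\<Prod>i\<in>{1..n}-{j',k}. c i) * (c j' * d j')" by (simp only: h3)
      also have "\<dots> = (\<Prod>i\<in>{1..n}-{k}. c i) * d j'" by (simp only: h2 mult_ac)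
      finally show ?thesis .
    qed
  qed
  define S where "S = (\<Sum>j'=1..n. \<Prod>i\<in>{1..n}-{j'}. c i)"
  define Pk where "Pk = (\<Prod>i\<in>{1..n}-{k}. c i)"
  have "S * d k = (\<Sum>j'=1..n. Pk * d j')"
    unfolding S_def Pk_def sum_distrib_right using key by (intro sum.cong) auto
  also have "\<dots> = Pk * (\<Sum>j'=1..n. d j')" by (simp add: sum_distrib_left)
  also have "(\<Sum>j'=1..n. d j') = (\<Sum>i=n+1..n+m. q_l i t) - (\<Sum>i=1..n. q_l i t)"
    unfolding d_def sum_subtractf using kirchhoff by simp
  also have "(\<Sum>i=1..n. q_l i t) = q_l k t + (\<Sum>i\<in>{1..n}-{k}. q_l i t)"
    using k by (simp add: sum.remove)
  finally have main: "S * d k = Pk * ((\<Sum>i=n+1..n+m. q_l i t) - (q_l k t + (\<Sum>i\<in>{1..n}-{k}. q_l i t)))" .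
  have "S * q_r k t = Pk * ((\<Sum>i=n+1..n+m. q_l i t) - (\<Sum>i\<in>{1..n}-{k}. q_l i t)) + (S - Pk) * q_l k t"
    using main unfolding d_def by (simp add: algebra_simps)
  moreover have "p_l j t = p_r 1 t" using junc_out j by auto
  ultimately show "(let c = (\<lambda>i. pipe_c Rs T0 z0 (A i) (L i));
          S = (\<Sum>j'=1..n. \<Prod>i\<in>{1..n}-{j'}. c i);
          Pk = (\<Prod>i\<in>{1..n}-{k}. c i)
      in S * q_r k t
         = Pk * ((\<Sum>i=n+1..n+m. q_l i t) - (\<Sum>i\<in>{1..n}-{k}. q_l i t)) + (S - Pk) * q_l k t)
     \<and> p_l j t = p_r 1 t"
    unfolding S_def Pk_def c_def Let_def by simp
qed

end
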